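(* Let $N\in\mathbb{N}$. Consider parameters $(D,b_1,\dots,b_N,r_1,\dots,r_N)$ with $D>0$, $b_i>0$ for $1\le i\le N$, and $0<r_1<r_2<\cdots<r_N$ (no relation between $D$ and $h:=\sum_{i=1}^N b_i/r_i$ is assumed; $D>h$, $D=h$ and $D<h$ are all allowed). For $k\in\mathbb{N}$ define the polynomial $$P_N^k(\lambda)=\Big(D+\frac{\lambda^2}{(2k-1)^2}\Big)\prod_{j=1}^N(\lambda+r_j)-\sum_{i=1}^N b_i\prod_{\substack{1\le j\le N\\ j\neq i}}(\lambda+r_j),$$ a polynomial of degree $N+2$ in $\lambda$, and call the multiset of its $N+2$ complex roots (counted with multiplicity) the cluster of eigenvalues associated with $k$. Let $k_1,k_2\in\mathbb{N}$ with $k_1<k_2$. Then the parameters $D, b_1,\dots,b_N, r_1,\dots,r_N$ are uniquely determined by (and can be recovered from) the two clusters of eigenvalues associated with $k=k_1$ and $k=k_2$; that is, if two admissible parameter tuples yield the same clusters for $k_1$ and for $k_2$, then the tuples coincide.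
   Context: This arises from the extended Burgers model $\partial_t^2u=D\,\partial_x^2u-\sum_{i=1}^N b_i\int_0^t e^{-r_i(t-\tau)}\partial_x^2u(\tau,x)\,d\tau$ on $(0,\pi/2)$ with $u(t,0)=0$, $\partial_xu(t,\pi/2)=0$; replacing $\partial_x^2$ by its eigenvalue $-(2k-1)^2$ (eigenfunction $\sin(2k-1)x$) in the first-order augmented system for $(u,\partial_tu,w_1,\dots,w_N)$ gives an $(N+2)\times(N+2)$ matrix whose eigenvalues ("clustered eigenvalues") are exactly the roots of $P_N^k$ as defined in the claim. *)

theory Defs
  imports Complex_Main "HOL-Computational_Algebra.Computational_Algebra"
begin

definition admissible :: "nat \<Rightarrow> real \<Rightarrow> (nat \<Rightarrow> real) \<Rightarrow> (nat \<Rightarrow> real) \<Rightarrow> bool" where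
  "admissible N D b r \<longleftrightarrow> D > 0 \<and> (\<forall>i\<in>{1..N}. b i > 0) \<and> (\<forall>i\<in>{1..N}. r i > 0) \<and>
     (\<forall>i\<in>{1..N}. \<forall>j\<in>{1..N}. i < j \<longrightarrow> r i < r j)"

definition PNk :: "nat \<Rightarrow> real \<Rightarrow> (nat \<Rightarrow> real) \<Rightarrow> (nat \<Rightarrow> real) \<Rightarrow> nat \<Rightarrow> complex poly" where
  "PNk N D b r k =
     [:complex_of_real D, 0, 1 / (of_nat (2*k - 1))^2:] * (\<Prod>j\<in>{1..N}. [:complex_of_real (r j), 1:])
     - (\<Sum>i\<in>{1..N}. smult (complex_of_real (b i)) (\<Prod>j\<in>{1..N} - {i}. [:complex_of_real (r j), 1:]))"

definition cluster :: "nat \<Rightarrow> real \<Rightarrow> (nat \<Rightarrow> real) \<Rightarrow> (nat \<Rightarrow> real) \<Rightarrow> nat \<Rightarrow> complex multiset" where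
  "cluster N D b r k = proots (PNk N D b r k)"

end

theory Submission
  imports Defs
begin

definition QQ :: "nat \<Rightarrow> (nat \<Rightarrow> real) \<Rightarrow> complex poly" where
  "QQ N r = (\<Prod>j\<in>{1..N}. [:complex_of_real (r j), 1:])"

definition RR :: "nat \<Rightarrow> (nat \<Rightarrow> real) \<Rightarrow> (nat \<Rightarrow> real) \<Rightarrow> complex poly" where
  "RR N b r = (\<Sum>i\<in>{1..N}. smult (complex_of_real (b i)) (\<Prod>j\<in>{1..N} - {i}. [:complex_of_real (r j), 1:]))"

lemma PNk_alt: "PNk N D b r k = [:complex_of_real D, 0, 1 / (of_nat (2*k - 1))^2:] * QQ N r - RR N b r"
  unfolding PNk_def QQ_def RR_def by simp

lemma prod_lin_deg: "finite A \<Longrightarrow> degree (\<Prod>j\<in>A. [:(f j::complex), 1:]) = card A"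
  by (subst degree_prod_eq_sum_degree) auto

lemma prod_lin_lead: "lead_coeff (\<Prod>j\<in>A. [:(f j::complex), 1:]) = 1"
  by (simp add: lead_coeff_prod)

lemma QQ_deg: "degree (QQ N r) = N"
  unfolding QQ_def by (simp add: prod_lin_deg)

lemma QQ_lead: "lead_coeff (QQ N r) = 1"
  unfolding QQ_def by (rule prod_lin_lead)

lemma RR_deg: "degree (RR N b r) \<le> N - 1"
  unfolding RR_def
proof (rule degree_sum_le)
  fix i assume "i \<in> {1..N}"
  then have "card ({1..N} - {i}) = N - 1" by simp
  then show "degree (smult (complex_of_real (b i)) (\<Prod>j\<in>{1..N} - {i}. [:complex_of_real (r j), 1:])) \<le> N - 1"
  proof -
    have "degree (\<Prod>j\<in>{1..N} - {i}. [:complex_of_real (r j), 1:]) = N - 1"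
      using \<open>card ({1..N} - {i}) = N - 1\<close> by (simp add: prod_lin_deg)
    then show ?thesis using degree_smult_le by (metis)
  qed
qed simp

lemma RR_coeff: "coeff (RR N b r) N = 0"
proof (cases N)
  case 0 then show ?thesis by (simp add: RR_def)
next
  case (Suc m)
  then have "degree (RR N b r) < N" using RR_deg[of N b r] by simp
  then show ?thesis by (simp add: coeff_eq_0)
qed

lemma PNk_lead:
  assumes "1 \<le> k"
  shows "lead_coeff (PNk N D b r k) = 1 / (of_nat (2*k - 1))^2"
proof -
  define c :: complex where "c = 1 / (of_nat (2*k - 1))^2"
  have h: "of_nat (2*k-1) \<noteq> (0::complex)" using assms by (simp only: of_nat_eq_0_iff)
  have c0: "c \<noteq> 0" unfolding c_def using h by (metis divide_eq_0_iff power_eq_0_iff zero_neq_one)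
  have dA: "degree [:complex_of_real D, 0, c:] = 2" using c0 by simp
  have lA: "lead_coeff [:complex_of_real D, 0, c:] = c" using c0 by simp
  have Q0: "QQ N r \<noteq> 0" using QQ_lead[of N r] by auto
  have dM: "degree ([:complex_of_real D, 0, c:] * QQ N r) = N + 2"
    using c0 Q0 dA by (subst degree_mult_eq) (auto simp: QQ_deg)
  have lM: "lead_coeff ([:complex_of_real D, 0, c:] * QQ N r) = c"
    by (metis lead_coeff_mult lA QQ_lead mult_1_right)
  have "degree (- RR N b r) < N + 2" using RR_deg[of N b r] by simp
  then have "lead_coeff (- RR N b r + [:complex_of_real D, 0, c:] * QQ N r) = c"
    using lead_coeff_add_le[of "- RR N b r" "[:complex_of_real D, 0, c:] * QQ N r"] dM lM by simp
  then show ?thesis unfolding PNk_alt c_def by (simp add: algebra_simps)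
qed

lemma PNk_eq:
  assumes "1 \<le> k" "cluster N D b r k = cluster N D' b' r' k"
  shows "PNk N D b r k = PNk N D' b' r' k"
proof -
  have "PNk N D b r k = smult (lead_coeff (PNk N D b r k)) (\<Prod>x\<in>#proots (PNk N D b r k). [:-x, 1:])"
    by (rule complex_poly_decompose_multiset[symmetric])
  also have "\<dots> = smult (lead_coeff (PNk N D' b' r' k)) (\<Prod>x\<in>#proots (PNk N D' b' r' k). [:-x, 1:])"
    using assms by (simp add: PNk_lead cluster_def)
  also have "\<dots> = PNk N D' b' r' k"
    by (rule complex_poly_decompose_multiset)
  finally show ?thesis .
qed

lemma sorted_img_eq:
  fixes f g :: "nat \<Rightarrow> real"
  assumes "\<forall>i\<in>{1..N}. \<forall>j\<in>{1..N}. i < j \<longrightarrow> f i < f j"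
    and "\<forall>i\<in>{1..N}. \<forall>j\<in>{1..N}. i < j \<longrightarrow> g i < g j"
    and "f ` {1..N} = g ` {1..N}"
  shows "\<forall>i\<in>{1..N}. f i = g i"
  using assms
proof (induction N)
  case 0
  then show ?case by simp
next
  case (Suc n)
  have fm: "f j \<le> f (Suc n)" if "j \<in> {1..Suc n}" for j
    using Suc.prems(1) that by (cases "j = Suc n") (auto simp: less_imp_le)
  have gm: "g j \<le> g (Suc n)" if "j \<in> {1..Suc n}" for j
    using Suc.prems(2) that by (cases "j = Suc n") (auto simp: less_imp_le)
  have "f (Suc n) \<in> g ` {1..Suc n}" using Suc.prems(3) by auto
  then have a1: "f (Suc n) \<le> g (Suc n)" using gm by auto
  have "g (Suc n) \<in> f ` {1..Suc n}" using Suc.prems(3) by auto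
  then have a2: "g (Suc n) \<le> f (Suc n)" using fm by auto
  have eqN: "f (Suc n) = g (Suc n)" using a1 a2 by simp
  have s: "{1..Suc n} = insert (Suc n) {1..n}" by auto
  have fn: "f (Suc n) \<notin> f ` {1..n}"
  proof
    assume "f (Suc n) \<in> f ` {1..n}"
    then obtain j where j: "j \<in> {1..n}" "f (Suc n) = f j" by auto
    have "j \<in> {1..Suc n} \<longrightarrow> Suc n \<in> {1..Suc n} \<longrightarrow> j < Suc n \<longrightarrow> f j < f (Suc n)"
      using Suc.prems(1) by blast
    then show False using j by simp
  qed
  have gn: "g (Suc n) \<notin> g ` {1..n}"
  proof
    assume "g (Suc n) \<in> g ` {1..n}"
    then obtain j where j: "j \<in> {1..n}" "g (Suc n) = g j" by auto
    have "j \<in> {1..Suc n} \<longrightarrow> Suc n \<in> {1..Suc n} \<longrightarrow> j < Suc n \<longrightarrow> g j < g (Suc n)"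
      using Suc.prems(2) by blast
    then show False using j by simp
  qed
  have fs: "f ` {1..Suc n} = insert (f (Suc n)) (f ` {1..n})" unfolding s by simp
  have gs: "g ` {1..Suc n} = insert (g (Suc n)) (g ` {1..n})" unfolding s by simp
  have "f ` {1..n} = f ` {1..Suc n} - {f (Suc n)}" unfolding fs using fn by (rule Diff_insert_absorb[symmetric])
  also have "\<dots> = g ` {1..Suc n} - {g (Suc n)}" using Suc.prems(3) eqN by simp
  also have "\<dots> = g ` {1..n}" unfolding gs using gn by (rule Diff_insert_absorb)
  finally have im: "f ` {1..n} = g ` {1..n}" .
  have m1: "\<forall>i\<in>{1..n}. \<forall>j\<in>{1..n}. i < j \<longrightarrow> f i < f j"
  proof (intro ballI impI)
    fix i j assume "i \<in> {1..n}" "j \<in> {1..n}" "i < j"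
    then have "i \<in> {1..Suc n}" "j \<in> {1..Suc n}" by auto
    then show "f i < f j" using Suc.prems(1) \<open>i < j\<close> by blast
  qed
  have m2: "\<forall>i\<in>{1..n}. \<forall>j\<in>{1..n}. i < j \<longrightarrow> g i < g j"
  proof (intro ballI impI)
    fix i j assume "i \<in> {1..n}" "j \<in> {1..n}" "i < j"
    then have "i \<in> {1..Suc n}" "j \<in> {1..Suc n}" by auto
    then show "g i < g j" using Suc.prems(2) \<open>i < j\<close> by blast
  qed
  have "\<forall>i\<in>{1..n}. f i = g i" using Suc.IH[OF m1 m2 im] .
  then show ?case using eqN by (auto simp: le_Suc_eq)
qed

lemma QQ_roots: "{x. poly (QQ N r) x = 0} = (\<lambda>j. - complex_of_real (r j)) ` {1..N}"
proof -
  have p: "poly (QQ N r) x = (\<Prod>j\<in>{1..N}. complex_of_real (r j) + x)" for x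
    unfolding QQ_def by (simp add: poly_prod)
  have "poly (QQ N r) x = 0 \<longleftrightarrow> (\<exists>j\<in>{1..N}. x = - complex_of_real (r j))" for x
    unfolding p by (simp add: prod_zero_iff add_eq_0_iff)
  then show ?thesis by (auto simp: image_iff)
qed

lemma RR_eval:
  assumes "i \<in> {1..N}"
  shows "poly (RR N b r) (- complex_of_real (r i)) =
    complex_of_real (b i) * (\<Prod>j\<in>{1..N} - {i}. complex_of_real (r j) - complex_of_real (r i))"
proof -
  have "poly (RR N b r) (- complex_of_real (r i)) =
     (\<Sum>i'\<in>{1..N}. complex_of_real (b i') * (\<Prod>j\<in>{1..N} - {i'}. complex_of_real (r j) - complex_of_real (r i)))"
    unfolding RR_def by (simp add: poly_sum poly_prod)
  also have "\<dots> = complex_of_real (b i) * (\<Prod>j\<in>{1..N} - {i}. complex_of_real (r j) - complex_of_real (r i))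
      + (\<Sum>i'\<in>{1..N} - {i}. complex_of_real (b i') * (\<Prod>j\<in>{1..N} - {i'}. complex_of_real (r j) - complex_of_real (r i)))"
    using assms by (simp add: sum.remove)
  also have "(\<Sum>i'\<in>{1..N} - {i}. complex_of_real (b i') * (\<Prod>j\<in>{1..N} - {i'}. complex_of_real (r j) - complex_of_real (r i))) = 0"
  proof (rule sum.neutral, rule ballI)
    fix i' assume "i' \<in> {1..N} - {i}"
    then have "i \<in> {1..N} - {i'}" using assms by auto
    then have "(\<Prod>j\<in>{1..N} - {i'}. complex_of_real (r j) - complex_of_real (r i)) = 0"
      by (subst prod_zero_iff) auto
    then show "complex_of_real (b i') * (\<Prod>j\<in>{1..N} - {i'}. complex_of_real (r j) - complex_of_real (r i)) = 0" by simp
  qed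
  finally show ?thesis by simp
qed

lemma aux1:
  fixes a a' x x' r r' :: "complex poly"
  assumes "a + smult c1 x - r = a' + smult c1 x' - r'" "a + smult c2 x - r = a' + smult c2 x' - r'"
  shows "smult (c1 - c2) x = smult (c1 - c2) x'"
proof -
  have "smult (c1 - c2) x = (a + smult c1 x - r) - (a + smult c2 x - r)" by (simp add: smult_diff_left)
  also have "\<dots> = (a' + smult c1 x' - r') - (a' + smult c2 x' - r')" using assms by simp
  also have "\<dots> = smult (c1 - c2) x'" by (simp add: smult_diff_left)
  finally show ?thesis .
qed

lemma aux2:
  fixes a a' s r r' :: "'a::ab_group_add"
  assumes "a + s - r = a' + s - r'"
  shows "a - r = a' - r'"
proof -
  have "a - r = (a + s - r) - s" by simp
  also have "\<dots> = (a' + s - r') - s" using assms by simp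
  also have "\<dots> = a' - r'" by simp
  finally show ?thesis .
qed

lemma split_quad: "[:d, 0, c:] * (Q::complex poly) = smult d Q + smult c (monom 1 2 * Q)"
proof -
  have "[:d, 0, c:] = [:d:] + smult c (monom 1 2)" by (rule poly_eqI) (auto simp: coeff_pCons coeff_monom split: nat.split)
  then show ?thesis by (simp add: distrib_right)
qed

theorem theorem2p1:
  fixes N k1 k2 :: nat and D D' :: real and b r b' r' :: "nat \<Rightarrow> real"
  assumes "admissible N D b r" and "admissible N D' b' r'"
    and "1 \<le> k1" and "k1 < k2"
    and "cluster N D b r k1 = cluster N D' b' r' k1"
    and "cluster N D b r k2 = cluster N D' b' r' k2"
  shows "D = D' \<and> (\<forall>i\<in>{1..N}. b i = b' i \<and> r i = r' i)"
proof -
  define c1 :: complex where "c1 = 1 / (of_nat (2*k1 - 1))^2"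
  define c2 :: complex where "c2 = 1 / (of_nat (2*k2 - 1))^2"
  define Q where "Q = QQ N r"
  define Q' where "Q' = QQ N r'"
  define R where "R = RR N b r"
  define R' where "R' = RR N b' r'"
  have E1: "PNk N D b r k1 = PNk N D' b' r' k1" using PNk_eq assms(3,5) by blast
  have E2: "PNk N D b r k2 = PNk N D' b' r' k2" using PNk_eq assms(3,4,6) by (metis less_imp_le order_trans)
  have F1: "smult (complex_of_real D) Q + smult c1 (monom 1 2 * Q) - R
     = smult (complex_of_real D') Q' + smult c1 (monom 1 2 * Q') - R'"
    using E1 unfolding PNk_alt split_quad c1_def Q_def Q'_def R_def R'_def .
  have F2: "smult (complex_of_real D) Q + smult c2 (monom 1 2 * Q) - R
     = smult (complex_of_real D') Q' + smult c2 (monom 1 2 * Q') - R'"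
    using E2 unfolding PNk_alt split_quad c2_def Q_def Q'_def R_def R'_def .
  have "smult (c1 - c2) (monom 1 2 * Q) = smult (c1 - c2) (monom 1 2 * Q')"
    by (rule aux1[OF F1 F2])
  moreover have "c1 \<noteq> c2"
  proof
    assume "c1 = c2"
    then have "(of_nat (2*k1 - 1))^2 = ((of_nat (2*k2 - 1))^2 :: complex)"
      by (metis c1_def c2_def inverse_eq_divide inverse_eq_iff_eq)
    then have "(of_nat ((2*k1 - 1)^2) :: complex) = of_nat ((2*k2 - 1)^2)" by simp
    then have "(2*k1 - 1)^2 = (2*k2 - 1)^2" using of_nat_eq_iff by blast
    then have "2*k1 - 1 = 2*k2 - 1" using power2_eq_iff_nonneg by blast
    then show False using assms(3,4) by simp
  qed
  ultimately have "smult (inverse (c1 - c2)) (smult (c1 - c2) (monom 1 2 * Q))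
     = smult (inverse (c1 - c2)) (smult (c1 - c2) (monom 1 2 * Q'))" and "c1 - c2 \<noteq> 0" by simp_all
  then have "monom 1 2 * Q = monom 1 2 * Q'" by (simp add: smult_smult)
  moreover have "monom 1 2 \<noteq> (0::complex poly)" by simp
  ultimately have QQ': "Q = Q'" by simp
  have F: "smult (complex_of_real D) Q - R = smult (complex_of_real D') Q - R'"
    using aux2[OF F1[unfolded QQ'[symmetric]]] .
  have cQ: "coeff Q N = 1" using QQ_lead[of N r] QQ_deg[of N r] by (simp add: Q_def)
  have "coeff (smult (complex_of_real D) Q - R) N = coeff (smult (complex_of_real D') Q - R') N"
    using F by simp
  then have "complex_of_real D = complex_of_real D'"
    using cQ by (simp add: R_def R'_def RR_coeff)
  then have DD: "D = D'" by simp
  have RR': "R = R'" using F DD by simp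
  have "(\<lambda>j. - complex_of_real (r j)) ` {1..N} = (\<lambda>j. - complex_of_real (r' j)) ` {1..N}"
    using QQ' QQ_roots[of N r] QQ_roots[of N r'] by (simp add: Q_def Q'_def)
  then have "(\<lambda>z. - Re z) ` (\<lambda>j. - complex_of_real (r j)) ` {1..N} = (\<lambda>z. - Re z) ` (\<lambda>j. - complex_of_real (r' j)) ` {1..N}"
    by simp
  then have "r ` {1..N} = r' ` {1..N}" by (simp add: image_image)
  moreover have mr: "\<forall>i\<in>{1..N}. \<forall>j\<in>{1..N}. i < j \<longrightarrow> r i < r j"
    using assms(1) by (simp add: admissible_def)
  moreover have "\<forall>i\<in>{1..N}. \<forall>j\<in>{1..N}. i < j \<longrightarrow> r' i < r' j"
    using assms(2) by (simp add: admissible_def)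
  ultimately have rr: "\<forall>i\<in>{1..N}. r i = r' i"
    using sorted_img_eq[of N r r'] by blast
  have bb: "b i = b' i" if i: "i \<in> {1..N}" for i
  proof -
    have "poly R (- complex_of_real (r i)) = poly R' (- complex_of_real (r' i))"
      using RR' rr i by simp
    then have eq: "complex_of_real (b i) * (\<Prod>j\<in>{1..N} - {i}. complex_of_real (r j) - complex_of_real (r i))
       = complex_of_real (b' i) * (\<Prod>j\<in>{1..N} - {i}. complex_of_real (r j) - complex_of_real (r i))"
    proof -
      have pc: "(\<Prod>j\<in>{1..N} - {i}. complex_of_real (r' j) - complex_of_real (r' i))
          = (\<Prod>j\<in>{1..N} - {i}. complex_of_real (r j) - complex_of_real (r i))"
        using rr i by (intro prod.cong) auto
      show ?thesis
        using \<open>poly R (- complex_of_real (r i)) = poly R' (- complex_of_real (r' i))\<close>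
          RR_eval[OF i, of b r] RR_eval[OF i, of b' r'] pc unfolding R_def R'_def
        by simp
    qed
    have nz: "\<forall>j\<in>{1..N} - {i}. complex_of_real (r j) - complex_of_real (r i) \<noteq> 0"
    proof
      fix j assume j: "j \<in> {1..N} - {i}"
      have "r j \<noteq> r i"
      proof (cases "j < i")
        case True then have "r j < r i" using mr i j by blast
        then show ?thesis by simp
      next
        case False then have "i < j" using j by auto
        then have "r i < r j" using mr i j by blast
        then show ?thesis by simp
      qed
      then show "complex_of_real (r j) - complex_of_real (r i) \<noteq> 0" by simp
    qed
    have "(\<Prod>j\<in>{1..N} - {i}. complex_of_real (r j) - complex_of_real (r i)) \<noteq> 0"
      using nz by (subst prod_zero_iff) auto
    then show ?thesis using eq by simp
  qed
  show ?thesis using DD rr bb by blast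
qed

end
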